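(* For every $\alpha\ge 1$ and $\beta\ge 1$, there exist a finite set $\mathcal{N}$ of $n$ agents, a finite set $\mathcal{M}$ of feasible centers, a positive integer $k$, and a pseudometric $d$ on $\mathcal{N}\cup\mathcal{M}$ such that no clustering is simultaneously in the $\alpha$-core with respect to the centroid loss $\ell_i(C,x)=d(i,x)$ and in the $\beta$-core with respect to the non-centroid loss $\ell_i(C,x)=\max_{j\in C}d(i,j)$.
   Context: Given agents $\mathcal{N}$ ($|\mathcal{N}|=n$), feasible centers $\mathcal{M}$, a positive integer $k$, and loss functions $\ell_i(C,x)\ge0$ defined for $C\subseteq\mathcal{N}$ with $i\in C$ and $x\in\mathcal{M}$: a clustering is $\mathcal{X}=\{(C_1,x_1),\dots,(C_k,x_k)\}$ where $C_1,\dots,C_k$ are pairwise disjoint subsets of $\mathcal{N}$ (some possibly empty) with union $\mathcal{N}$ and $x_t\in\mathcal{M}$; $\ell_i(\mathcal{X})=\ell_i(C_t,x_t)$ for the unique $t$ with $i\in C_t$. For $\alpha\ge1$, $\mathcal{X}$ is in the $\alpha$-core (with respect to the losses $\ell_i$) if there is no $S\subseteq\mathcal{N}$ with $|S|\ge n/k$ and $y\in\mathcal{M}$ such that $\alpha\cdot\ell_i(S,y)<\ell_i(\mathcal{X})$ for all $i\in S$. A pseudometric satisfies $d(x,x)=0$, symmetry and the triangle inequality. *)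

theory Defs
  imports Main "HOL.Real"
begin

text \<open>Agents and feasible centers are both represented as natural numbers (points of
  the space N \<union> M); a loss function maps an agent i, a coalition C and a center x
  to a nonnegative real.\<close>

definition pseudometric_on :: "nat set \<Rightarrow> (nat \<Rightarrow> nat \<Rightarrow> real) \<Rightarrow> bool" where
  "pseudometric_on P d \<longleftrightarrow>
     (\<forall>x\<in>P. d x x = 0) \<and>
     (\<forall>x\<in>P. \<forall>y\<in>P. d x y = d y x) \<and>
     (\<forall>x\<in>P. \<forall>y\<in>P. \<forall>z\<in>P. d x z \<le> d x y + d y z)"

definition is_clustering ::
  "nat set \<Rightarrow> nat set \<Rightarrow> nat \<Rightarrow> (nat \<Rightarrow> nat set) \<Rightarrow> (nat \<Rightarrow> nat) \<Rightarrow> bool" where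
  "is_clustering N M k C x \<longleftrightarrow>
     (\<forall>s<k. \<forall>t<k. s \<noteq> t \<longrightarrow> C s \<inter> C t = {}) \<and>
     (\<Union>t<k. C t) = N \<and>
     (\<forall>t<k. x t \<in> M)"

definition clustering_loss ::
  "(nat \<Rightarrow> nat set \<Rightarrow> nat \<Rightarrow> real) \<Rightarrow> nat \<Rightarrow> (nat \<Rightarrow> nat set) \<Rightarrow> (nat \<Rightarrow> nat) \<Rightarrow> nat \<Rightarrow> real" where
  "clustering_loss l k C x i = (let t = (THE t. t < k \<and> i \<in> C t) in l i (C t) (x t))"

definition in_core ::
  "(nat \<Rightarrow> nat set \<Rightarrow> nat \<Rightarrow> real) \<Rightarrow> nat set \<Rightarrow> nat set \<Rightarrow> nat \<Rightarrow> real
   \<Rightarrow> (nat \<Rightarrow> nat set) \<Rightarrow> (nat \<Rightarrow> nat) \<Rightarrow> bool" where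
  "in_core l N M k \<alpha> C x \<longleftrightarrow>
     \<not> (\<exists>S y. S \<subseteq> N \<and> real (card S) \<ge> real (card N) / real k \<and> y \<in> M \<and>
            (\<forall>i\<in>S. \<alpha> * l i S y < clustering_loss l k C x i))"

definition centroid_loss :: "(nat \<Rightarrow> nat \<Rightarrow> real) \<Rightarrow> nat \<Rightarrow> nat set \<Rightarrow> nat \<Rightarrow> real" where
  "centroid_loss d i C x = d i x"

definition noncentroid_loss :: "(nat \<Rightarrow> nat \<Rightarrow> real) \<Rightarrow> nat \<Rightarrow> nat set \<Rightarrow> nat \<Rightarrow> real" where
  "noncentroid_loss d i C x = Max ((\<lambda>j. d i j) ` C)"

end

theory Submission
  imports Defs
begin

definition dd :: "real \<Rightarrow> nat \<Rightarrow> nat \<Rightarrow> real" where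
  "dd K i j = (if i = j then 0 else if i div 3 \<noteq> j div 3 then K * K
               else if i mod 3 = 2 \<or> j mod 3 = 2 then K else 1)"

lemma dd_tri:
  fixes K :: real
  assumes "K \<ge> 1"
  shows "dd K x z \<le> dd K x y + dd K y z"
proof -
  have h1: "K \<le> K * K" using assms by (simp add: mult_le_cancel_left1)
  have h2: "1 \<le> K * K" using assms h1 by linarith
  show ?thesis using assms h1 h2 unfolding dd_def by (auto split: if_splits)
qed

lemma dd_pm:
  fixes K :: real
  assumes "K \<ge> 1"
  shows "pseudometric_on P (dd K)"
  unfolding pseudometric_on_def using dd_tri[OF assms]
  by (auto simp: dd_def)

lemma three_vals:
  fixes a b c d :: nat
  shows "a<3 \<Longrightarrow> b<3 \<Longrightarrow> c<3 \<Longrightarrow> d<3 \<Longrightarrow> a\<noteq>b \<Longrightarrow> c\<noteq>a \<Longrightarrow> c\<noteq>b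
    \<Longrightarrow> d\<noteq>b \<Longrightarrow> d\<noteq>c \<Longrightarrow> d = a"
  by presburger

lemma key:
  fixes \<alpha> \<beta> K :: real
  assumes a1: "\<alpha> \<ge> 1" and b1: "\<beta> \<ge> 1" and Ka: "\<alpha> < K" and Kb: "\<beta> < K"
  and cl: "is_clustering {0,1,2,3,4,5} {0,1,3,4} 3 C x"
  and cc: "in_core (centroid_loss (dd K)) {0,1,2,3,4,5} {0,1,3,4} 3 \<alpha> C x"
  and nc: "in_core (noncentroid_loss (dd K)) {0,1,2,3,4,5} {0,1,3,4} 3 \<beta> C x"
  shows False
proof -
  define N where "N = {0,1,2,3,4,5::nat}"
  define T where "T i = (THE t. t < 3 \<and> i \<in> C t)" for i
  have K1: "K > 1" using Kb b1 by simp
  have disj: "\<And>s t. s<3 \<Longrightarrow> t<3 \<Longrightarrow> s \<noteq> t \<Longrightarrow> C s \<inter> C t = {}"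
    and un: "(\<Union>t<3. C t) = N" and xM: "\<And>t. t<3 \<Longrightarrow> x t \<in> {0,1,3,4}"
    using cl unfolding is_clustering_def N_def by auto
  have T: "T i < 3 \<and> i \<in> C (T i)" if "i \<in> N" for i
  proof -
    obtain t where t: "t<3" "i \<in> C t" using un \<open>i \<in> N\<close> by auto
    have "(THE t. t < 3 \<and> i \<in> C t) = t"
      using t disj by (intro the_equality) blast+
    then show ?thesis using t T_def by simp
  qed
  have CN: "C t \<subseteq> N" if "t<3" for t using un that by auto
  have Tu: "T i = t" if "t<3" "i \<in> C t" for i t
    using T[of i] CN[of t] that disj[of t "T i"] by blast
  have fin: "finite (C t)" if "t<3" for t using CN[OF that] unfolding N_def
    by (rule finite_subset) simp
  define Lc where "Lc i = dd K i (x (T i))" for i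
  define Ln where "Ln i = Max ((\<lambda>j. dd K i j) ` C (T i))" for i
  have lc: "clustering_loss (centroid_loss (dd K)) 3 C x i = Lc i" for i
    by (simp add: clustering_loss_def centroid_loss_def T_def Let_def Lc_def)
  have ln: "clustering_loss (noncentroid_loss (dd K)) 3 C x i = Ln i" for i
    by (simp add: clustering_loss_def noncentroid_loss_def T_def Let_def Ln_def)
  have Lnge: "dd K i j \<le> Ln i" if "i \<in> N" "j \<in> C (T i)" for i j
    unfolding Ln_def using fin[of "T i"] T[OF that(1)] that(2) by (intro Max_ge) auto
  have ddnn: "dd K i j \<ge> 0" for i j using K1 by (simp add: dd_def)
  have ddpos: "dd K i j > 0" if "i \<noteq> j" for i j using K1 that by (simp add: dd_def)
  have ddsym: "dd K i j = dd K j i" for i j by (auto simp: dd_def)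
  have card2: "real (card {i,j::nat}) \<ge> real (card N) / real (3::nat)" if "i \<noteq> j" for i j
    using that unfolding N_def by simp
  have NC: "\<not> (\<beta> * dd K i j < Ln i \<and> \<beta> * dd K i j < Ln j)"
    if "i \<in> N" "j \<in> N" "i \<noteq> j" for i j
  proof
    assume h: "\<beta> * dd K i j < Ln i \<and> \<beta> * dd K i j < Ln j"
    have m1: "noncentroid_loss (dd K) i {i,j} 0 = dd K i j"
      using ddnn[of i j] by (simp add: noncentroid_loss_def dd_def[of K i i])
    have m2: "noncentroid_loss (dd K) j {i,j} 0 = dd K i j"
      using ddnn[of j i] ddsym[of i j] by (simp add: noncentroid_loss_def dd_def[of K j j] max_def)
    have "\<exists>S y. S \<subseteq> {0,1,2,3,4,5} \<and> real (card S) \<ge> real (card {0,1,2,3,4,5::nat}) / real (3::nat)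
           \<and> y \<in> {0,1,3,4::nat} \<and>
           (\<forall>m\<in>S. \<beta> * noncentroid_loss (dd K) m S y < clustering_loss (noncentroid_loss (dd K)) 3 C x m)"
      apply (rule exI[of _ "{i,j}"], rule exI[of _ 0])
      using that card2[OF that(3)] h m1 m2 ln unfolding N_def by auto
    then show False using nc unfolding in_core_def by blast
  qed
  have CC: "\<not> (\<alpha> * dd K i y < Lc i \<and> \<alpha> * dd K j y < Lc j)"
    if "i \<in> N" "j \<in> N" "i \<noteq> j" "y \<in> {0,1,3,4}" for i j y
  proof
    assume h: "\<alpha> * dd K i y < Lc i \<and> \<alpha> * dd K j y < Lc j"
    have "\<exists>S y. S \<subseteq> {0,1,2,3,4,5} \<and> real (card S) \<ge> real (card {0,1,2,3,4,5::nat}) / real (3::nat)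
           \<and> y \<in> {0,1,3,4::nat} \<and>
           (\<forall>m\<in>S. \<alpha> * centroid_loss (dd K) m S y < clustering_loss (centroid_loss (dd K)) 3 C x m)"
      apply (rule exI[of _ "{i,j}"], rule exI[of _ y])
      using that card2[OF that(3)] h lc unfolding N_def by (auto simp: centroid_loss_def)
    then show False using cc unfolding in_core_def by blast
  qed
  have close01: "j \<in> {0,1}" if "i \<in> {0,1}" "j \<in> N" "dd K i j < K" for i j
    using that K1 unfolding N_def by (auto simp: dd_def)
  have close34: "j \<in> {3,4}" if "i \<in> {3,4}" "j \<in> N" "dd K i j < K" for i j
    using that K1 unfolding N_def by (auto simp: dd_def)
  have inN: "i \<in> N" if "i \<in> C (T j)" "j \<in> N" for i j using CN T that by blast
  have side: "\<exists>a<3. C a \<subseteq> {p,q} \<and> C a \<noteq> {}"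
    if pq: "p \<in> N" "q \<in> N" "p \<noteq> q" "dd K p q = 1"
      and cl: "\<And>i j. i \<in> {p,q} \<Longrightarrow> j \<in> N \<Longrightarrow> dd K i j < K \<Longrightarrow> j \<in> {p,q}" for p q
  proof -
    have "Ln p \<le> \<beta> \<or> Ln q \<le> \<beta>" using NC[OF pq(1,2,3)] pq(4) by auto
    then show ?thesis
    proof
      assume "Ln p \<le> \<beta>"
      then have "C (T p) \<subseteq> {p,q}" using Lnge[OF pq(1)] cl[of p] inN[OF _ pq(1)] Kb by force
      then show ?thesis using T[OF pq(1)] by blast
    next
      assume "Ln q \<le> \<beta>"
      then have "C (T q) \<subseteq> {p,q}" using Lnge[OF pq(2)] cl[of q] inN[OF _ pq(2)] Kb by force
      then show ?thesis using T[OF pq(2)] by blast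
    qed
  qed
  obtain a where a: "a<3" "C a \<subseteq> {0,1}" "C a \<noteq> {}"
    using side[of 0 1] close01 unfolding N_def by (auto simp: dd_def)
  obtain b where b: "b<3" "C b \<subseteq> {3,4}" "C b \<noteq> {}"
    using side[of 3 4] close34 unfolding N_def by (auto simp: dd_def)
  have N2: "2 \<in> N" and N5: "5 \<in> N" and N0: "0 \<in> N" and N1: "1 \<in> N" and N3: "3 \<in> N" and N4: "4 \<in> N"
    unfolding N_def by auto
  have ab: "a \<noteq> b"
  proof
    assume e: "a = b"
    obtain z where z: "z \<in> C a" using a(3) by blast
    show False using z a(2) b(2) e by fastforce
  qed
  have T2: "T 2 \<noteq> a" "T 2 \<noteq> b" using T[OF N2] a b by auto
  have T5: "T 5 \<noteq> a" "T 5 \<noteq> b" using T[OF N5] a b by auto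
  have T25: "T 2 = T 5" using T2 T5 ab a(1) b(1) T[OF N2] T[OF N5] three_vals[of a b "T 2" "T 5"] by metis
  have L2: "Ln 2 \<ge> K * K" using Lnge[OF N2, of 5] T[OF N5] T25 by (simp add: dd_def)
  have L5: "Ln 5 \<ge> K * K" using Lnge[OF N5, of 2] T[OF N2] T25 by (simp add: dd_def)
  have KK: "\<beta> * K < K * K" using Kb K1 by simp
  have KKa: "\<alpha> * K < K * K" using Ka K1 by simp
  have notT2: "T i \<noteq> T 2" if "i \<in> {0,1,3,4}" for i
  proof
    assume e: "T i = T 2"
    have iN: "i \<in> N" using that unfolding N_def by auto
    show False
    proof (cases "i \<in> {0,1}")
      case True
      have "Ln i \<ge> K * K" using Lnge[OF iN, of 5] T[OF N5] T25 e True by (auto simp: dd_def)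
      moreover have "dd K i 2 = K" using True by (auto simp: dd_def)
      ultimately show False using NC[OF iN N2] True L2 KK by auto
    next
      case False
      then have F: "i \<in> {3,4}" using that by auto
      have "Ln i \<ge> K * K" using Lnge[OF iN, of 2] T[OF N2] e F by (auto simp: dd_def)
      moreover have "dd K i 5 = K" using F by (auto simp: dd_def)
      ultimately show False using NC[OF iN N5] F L5 KK by auto
    qed
  qed
  have Ta: "T i = a" if "i \<in> {0,1}" for i
  proof -
    have iN: "i \<in> N" using that unfolding N_def by auto
    have "T i \<noteq> b" using T[OF iN] b that by auto
    moreover have "T i \<noteq> T 2" using notT2 that by auto
    ultimately show ?thesis using T[OF iN] T2 T[OF N2] ab a(1) b(1) three_vals[of a b "T 2" "T i"] by metis
  qed
  have Tb: "T i = b" if "i \<in> {3,4}" for i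
  proof -
    have iN: "i \<in> N" using that unfolding N_def by auto
    have "T i \<noteq> a" using T[OF iN] a that by auto
    moreover have "T i \<noteq> T 2" using notT2 that by auto
    ultimately show ?thesis using T[OF iN] T2 T[OF N2] ab a(1) b(1) three_vals[of b a "T 2" "T i"] by metis
  qed
  have x2: "x (T 2) \<in> {0,1,3,4}" using xM T[OF N2] by blast
  show False
  proof (cases "x (T 2) \<in> {3,4}")
    case True
    have F2: "x (T 2) = 3 \<or> x (T 2) = 4" using True by simp
    have Lc2: "Lc 2 = K * K"
    proof (cases "x (T 2) = 3")
      case True then show ?thesis by (simp add: Lc_def dd_def)
    next
      case False with F2 have "x (T 2) = 4" by simp
      then show ?thesis by (simp add: Lc_def dd_def)
    qed
    obtain u where u: "u \<in> {0,1}" "u \<noteq> x a"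
    proof (cases "x a = 0")
      case True
      then show ?thesis using that[of 1] by simp
    next
      case False
      then show ?thesis using that[of 0] by simp
    qed
    have uN: "u \<in> N" using u unfolding N_def by auto
    have "Lc u > 0" unfolding Lc_def using Ta[OF u(1)] u(2) ddpos by simp
    moreover have "dd K 2 u = K"
    proof (cases "u = 0")
      case True then show ?thesis by (simp add: dd_def)
    next
      case False with u have "u = 1" by simp
      then show ?thesis by (simp add: dd_def)
    qed
    moreover have "dd K u u = 0" by (simp add: dd_def)
    moreover have "u \<noteq> 2" using u by auto
    ultimately show False using CC[OF uN N2, of u] u Lc2 KKa by auto
  next
    case False
    then have F: "x (T 2) \<in> {0,1}" using x2 by auto
    have F5: "x (T 5) = 0 \<or> x (T 5) = 1" using F T25 by simp
    have Lc5: "Lc 5 = K * K"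
    proof (cases "x (T 5) = 0")
      case True then show ?thesis by (simp add: Lc_def dd_def)
    next
      case False with F5 have "x (T 5) = 1" by simp
      then show ?thesis by (simp add: Lc_def dd_def)
    qed
    obtain u where u: "u \<in> {3,4}" "u \<noteq> x b"
    proof (cases "x b = 3")
      case True
      then show ?thesis using that[of 4] by simp
    next
      case False
      then show ?thesis using that[of 3] by simp
    qed
    have uN: "u \<in> N" using u unfolding N_def by auto
    have "Lc u > 0" unfolding Lc_def using Tb[OF u(1)] u(2) ddpos by simp
    moreover have "dd K 5 u = K"
    proof (cases "u = 3")
      case True then show ?thesis by (simp add: dd_def)
    next
      case False with u have "u = 4" by simp
      then show ?thesis by (simp add: dd_def)
    qed
    moreover have "dd K u u = 0" by (simp add: dd_def)
    moreover have "u \<noteq> 5" using u by auto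
    moreover have "u \<in> {0,1,3,4}" using u by auto
    ultimately show False using CC[OF uN N5, of u] u Lc5 KKa by auto
  qed
qed

theorem mainTheorem2:
  fixes \<alpha> \<beta> :: real
  assumes "\<alpha> \<ge> 1" and "\<beta> \<ge> 1"
  shows "\<exists>(N::nat set) (M::nat set) (k::nat) (d::nat \<Rightarrow> nat \<Rightarrow> real).
           finite N \<and> N \<noteq> {} \<and> finite M \<and> M \<noteq> {} \<and> k > 0 \<and>
           pseudometric_on (N \<union> M) d \<and>
           \<not> (\<exists>C x. is_clustering N M k C x \<and>
                    in_core (centroid_loss d) N M k \<alpha> C x \<and>
                    in_core (noncentroid_loss d) N M k \<beta> C x)"
proof -
  define K where "K = \<alpha> + \<beta> + 1"
  have Ka: "\<alpha> < K" and Kb: "\<beta> < K" and K1: "K \<ge> 1" using assms unfolding K_def by auto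
  show ?thesis
    apply (rule exI[of _ "{0,1,2,3,4,5}"], rule exI[of _ "{0,1,3,4}"], rule exI[of _ 3],
           rule exI[of _ "dd K"])
    using dd_pm[OF K1] key[OF assms Ka Kb] by auto
qed

end
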